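(* Consider the cone percolation process on $\mathbb{T}_d$ ($d\ge2$) with radius of influence distributed as $R$. Let $\rho$ be the smallest non-negative root of $\mathbb{E}(\rho^{d^R}) + (1-\rho)p_0 = \rho$, and let $\psi$ be the smallest non-negative root of $\mathbb{E}\big(\psi^{\frac{d}{d-1}(d^R-1)}\big) = \psi$. Then $$1-\Big(1-\rho^{\frac{d+1}{d}}\Big)p_0 - \mathbb{E}\Big(\rho^{\frac{d+1}{d}d^R}\Big) \;\le\; \mathbb{P}[V] \;\le\; 1-\mathbb{E}\Big(\psi^{\frac{d+1}{d-1}(d^R-1)}\Big).$$
   Context: Let $d\ge 2$ and let $\mathbb{T}_d$ be the infinite tree in which every vertex has exactly $d+1$ neighbours. Fix a vertex $\mathcal{O}$ (the origin); $d(u,v)$ denotes graph distance. Write $u\le v$ if $u$ lies on the path from $\mathcal{O}$ to $v$ (so $\mathcal{O}\le v$ for all $v$). Fix a neighbour $w$ of $\mathcal{O}$ and let $\mathbb{T}_d^+$ be the subtree obtained by deleting all vertices $x$ with $w\le x$; in $\mathbb{T}_d^+$ every vertex $u$ has exactly $d$ neighbours $x$ with $u\le x$ (its children). Let $R$ be a random variable with values in $\{0,1,2,\dots\}$, $p_k=\mathbb{P}(R=k)$, and assume $p_0\in(0,1)$. Cone percolation on $G\in\{\mathbb{T}_d,\mathbb{T}_d^+\}$: to each vertex $u$ of $G$ attach an independent copy $R_u$ of $R$; let $B_u=\{v\in G: u\le v,\ d(u,v)\le R_u\}$; set $I_0=\{\mathcal{O}\}$, $I_{n+1}=\bigcup_{u\in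 I_n}B_u$ for $n\ge0$, $I=\bigcup_{n\ge0}I_n$, and let $V$ be the event $\{|I|=\infty\}$ (survival). $\mathbb{P}_+$ and $\mathbb{P}$ denote the probability measures of the process on $\mathbb{T}_d^+$ and on $\mathbb{T}_d$ respectively. Convention: $x^0=1$ for all $x\ge0$. *)

theory Defs
  imports "HOL-Probability.Probability" "HOL-Library.Sublist"
begin

text \<open>Vertices of the (d+1)-regular tree T_d, rooted at the origin O = [].
  A vertex is the list of child indices along the path from O: the origin has
  d+1 children (indices < d+1), every other vertex has d children (indices < d).
  u \<le> v in the paper's sense is exactly prefix u v, and for u \<le> v the graph
  distance is length v - length u.\<close>

definition tree_vertex :: "nat \<Rightarrow> nat list \<Rightarrow> bool" where
  "tree_vertex d v = (case v of [] \<Rightarrow> True | a # w \<Rightarrow> a < d + 1 \<and> (\<forall>x\<in>set w. x < d))"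

definition tree_vertices :: "nat \<Rightarrow> nat list set" where
  "tree_vertices d = {v. tree_vertex d v}"

definition cone_ball :: "nat \<Rightarrow> (nat list \<Rightarrow> nat) \<Rightarrow> nat list \<Rightarrow> nat list set" where
  "cone_ball d r u = {v \<in> tree_vertices d. prefix u v \<and> length v - length u \<le> r u}"

primrec cone_I :: "nat \<Rightarrow> (nat list \<Rightarrow> nat) \<Rightarrow> nat \<Rightarrow> nat list set" where
  "cone_I d r 0 = {[]}"
| "cone_I d r (Suc n) = (\<Union>u\<in>cone_I d r n. cone_ball d r u)"

definition cone_infected :: "nat \<Rightarrow> (nat list \<Rightarrow> nat) \<Rightarrow> nat list set" where
  "cone_infected d r = (\<Union>n. cone_I d r n)"

definition cone_measure :: "nat \<Rightarrow> nat pmf \<Rightarrow> (nat list \<Rightarrow> nat) measure" where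
  "cone_measure d p = PiM (tree_vertices d) (\<lambda>_. measure_pmf p)"

definition survival :: "nat \<Rightarrow> nat pmf \<Rightarrow> (nat list \<Rightarrow> nat) set" where
  "survival d p = {r \<in> space (cone_measure d p). infinite (cone_infected d r)}"

text \<open>Real power with the convention x^0 = 1 for all x \<ge> 0.\<close>
definition pw :: "real \<Rightarrow> real \<Rightarrow> real" where
  "pw x a = (if a = 0 then 1 else x powr a)"

end

theory Submission
  imports Defs
begin

definition ch :: "nat \<Rightarrow> nat list \<Rightarrow> nat" where
  "ch d w = (if w = [] then Suc d else d)"

primrec pinf :: "nat \<Rightarrow> nat \<Rightarrow> nat list \<Rightarrow> nat list \<Rightarrow> (nat list \<Rightarrow> nat) \<Rightarrow> bool" where
  "pinf d b w [] r = True"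
| "pinf d b w (c#x) r = (1 \<le> max b (r w) \<and> c < ch d w \<and> pinf d (max b (r w) - 1) (w@[c]) x r)"

primrec inb :: "nat \<Rightarrow> nat \<Rightarrow> nat list \<Rightarrow> nat list \<Rightarrow> (nat list \<Rightarrow> nat) \<Rightarrow> nat" where
  "inb d b w [] r = b"
| "inb d b w (c#x) r = inb d (max b (r w) - 1) (w@[c]) x r"

primrec reach :: "nat \<Rightarrow> nat \<Rightarrow> nat \<Rightarrow> nat list \<Rightarrow> (nat list \<Rightarrow> nat) \<Rightarrow> bool" where
  "reach d 0 b w r = True"
| "reach d (Suc n) b w r = (1 \<le> max b (r w) \<and> (\<exists>c<ch d w. reach d n (max b (r w) - 1) (w@[c]) r))"

lemma reach_pinf: "reach d n b w r \<longleftrightarrow> (\<exists>x. length x = n \<and> pinf d b w x r)"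
proof (induction n arbitrary: b w)
  case 0 then show ?case by auto
next
  case (Suc n)
  show ?case
  proof
    assume "reach d (Suc n) b w r"
    then obtain c x where "1 \<le> max b (r w)" "c < ch d w" "length x = n" "pinf d (max b (r w) - 1) (w@[c]) x r"
      using Suc by auto
    then show "\<exists>x. length x = Suc n \<and> pinf d b w x r" by (intro exI[of _ "c#x"]) auto
  next
    assume "\<exists>x. length x = Suc n \<and> pinf d b w x r"
    then obtain x where "length x = Suc n" "pinf d b w x r" by auto
    then show "reach d (Suc n) b w r" using Suc by (cases x) auto
  qed
qed

lemma pinf_append: "pinf d b w (y@z) r \<longleftrightarrow> pinf d b w y r \<and> pinf d (inb d b w y r) (w@y) z r"
  by (induction y arbitrary: b w) auto

lemma tree_vertex_Nil[simp]: "tree_vertex d []"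
  by (simp add: tree_vertex_def)

lemma tree_vertex_snoc: "tree_vertex d (w@[c]) \<longleftrightarrow> tree_vertex d w \<and> c < ch d w"
  by (cases w) (auto simp: tree_vertex_def ch_def)

lemma tree_vertex_appendD: "tree_vertex d (w@x) \<Longrightarrow> tree_vertex d w"
  by (induction x rule: rev_induct) (auto simp: tree_vertex_snoc simp flip: append_assoc)

lemma pinf_tree_vertex: "pinf d b w x r \<Longrightarrow> tree_vertex d w \<Longrightarrow> tree_vertex d (w@x)"
proof (induction x arbitrary: b w)
  case (Cons c x)
  then have "tree_vertex d (w@[c])" by (auto simp: tree_vertex_snoc)
  with Cons show ?case by fastforce
qed auto

lemma pinf_long: "tree_vertex d (u@z) \<Longrightarrow> length z \<le> max b (r u) \<Longrightarrow> pinf d b u z r"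
proof (induction z arbitrary: b u)
  case (Cons c z)
  have tv: "tree_vertex d ((u@[c])@z)" using Cons by simp
  then have "c < ch d u" using tree_vertex_appendD tree_vertex_snoc by blast
  moreover have "length z \<le> max (max b (r u) - 1) (r (u@[c]))"
    using Cons.prems(2) by simp
  then have "pinf d (max b (r u) - 1) (u@[c]) z r"
    using tv by (intro Cons.IH) simp_all
  moreover have "1 \<le> max b (r u)" using Cons.prems(2) by simp
  ultimately show ?case by simp
qed auto

lemma cone_I_sub: "v \<in> cone_I d r n \<Longrightarrow> v \<in> cone_infected d r"
  by (auto simp: cone_infected_def)

lemma cone_infected_ball: "u \<in> cone_infected d r \<Longrightarrow> v \<in> cone_ball d r u \<Longrightarrow> v \<in> cone_infected d r"
proof -
  assume "u \<in> cone_infected d r" "v \<in> cone_ball d r u"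
  then obtain n where "u \<in> cone_I d r n" by (auto simp: cone_infected_def)
  then have "v \<in> cone_I d r (Suc n)" using \<open>v \<in> cone_ball d r u\<close> by auto
  then show ?thesis unfolding cone_infected_def by blast
qed

lemma cone_I_pinf: "v \<in> cone_I d r n \<Longrightarrow> pinf d 0 [] v r"
proof (induction n arbitrary: v)
  case (Suc n)
  then obtain u where u: "u \<in> cone_I d r n" "v \<in> cone_ball d r u" by auto
  then obtain z where z: "v = u @ z" "length z \<le> r u" "tree_vertex d (u@z)"
    by (auto simp: cone_ball_def prefix_def tree_vertices_def)
  have "pinf d (inb d 0 [] u r) ([]@u) z r"
    using z by (intro pinf_long) auto
  with Suc.IH[OF u(1)] show ?case using z by (simp add: pinf_append)
qed simp

lemma pinf_cone_aux:
  assumes "pinf d b w x r" "tree_vertex d w" "w \<in> cone_infected d r"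
    "b = 0 \<or> (\<exists>u\<in>cone_infected d r. prefix u w \<and> length w - length u + b \<le> r u)"
  shows "w @ x \<in> cone_infected d r"
  using assms
proof (induction x arbitrary: b w)
  case Nil then show ?case by simp
next
  case (Cons c x)
  let ?m = "max b (r w)"
  have m1: "1 \<le> ?m" and c: "c < ch d w" and p: "pinf d (?m - 1) (w@[c]) x r" using Cons.prems by auto
  have tv: "tree_vertex d (w@[c])" using c Cons.prems by (simp add: tree_vertex_snoc)
  have inv: "w@[c] \<in> cone_infected d r \<and>
    (\<exists>u\<in>cone_infected d r. prefix u (w@[c]) \<and> length (w@[c]) - length u + (?m - 1) \<le> r u)"
  proof (cases "r w \<ge> b")
    case True
    then have "w@[c] \<in> cone_ball d r w" using m1 tv by (auto simp: cone_ball_def tree_vertices_def)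
    then have "w@[c] \<in> cone_infected d r" using Cons.prems(3) by (rule cone_infected_ball[rotated])
    then show ?thesis using True Cons.prems(3) m1
      by (intro conjI bexI[of _ w]) auto
  next
    case False
    then have b: "b \<noteq> 0" "?m = b" by auto
    then obtain u where u: "u\<in>cone_infected d r" "prefix u w" "length w - length u + b \<le> r u"
      using Cons.prems(4) by auto
    have "length u \<le> length w" using u(2) prefix_length_le by blast
    then have "w@[c] \<in> cone_ball d r u" using u tv b
      by (auto simp: cone_ball_def tree_vertices_def prefix_def)
    then have "w@[c] \<in> cone_infected d r" using u(1) by (rule cone_infected_ball[rotated])
    then show ?thesis using u b \<open>length u \<le> length w\<close>
      by (intro conjI bexI[of _ u]) (auto simp: prefix_def)
  qed
  have "(w@[c]) @ x \<in> cone_infected d r"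
    using inv p tv by (intro Cons.IH[of "?m - 1"]) auto
  then show ?case by simp
qed

lemma Nil_infected: "[] \<in> cone_infected d r"
  unfolding cone_infected_def by (auto intro!: exI[of _ 0])

lemma cone_infected_eq: "cone_infected d r = {v. pinf d 0 [] v r}"
proof (intro set_eqI iffI)
  fix v assume "v \<in> cone_infected d r"
  then show "v \<in> {v. pinf d 0 [] v r}" by (auto simp: cone_infected_def intro: cone_I_pinf)
next
  fix v assume "v \<in> {v. pinf d 0 [] v r}"
  then show "v \<in> cone_infected d r"
    using pinf_cone_aux[of d 0 "[]" v r] Nil_infected by auto
qed

lemma infinite_iff_reach: "infinite (cone_infected d r) \<longleftrightarrow> (\<forall>n. reach d n 0 [] r)"
proof
  assume inf: "infinite (cone_infected d r)"
  show "\<forall>n. reach d n 0 [] r"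
  proof
    fix n
    have "{v. tree_vertex d v \<and> length v < n} \<subseteq> {xs. set xs \<subseteq> {..d} \<and> length xs \<le> n}"
    proof
      fix v assume "v \<in> {v. tree_vertex d v \<and> length v < n}"
      then have v: "tree_vertex d v" "length v < n" by auto
      have "set v \<subseteq> {..d}"
      proof (cases v)
        case (Cons a w) then show ?thesis using v by (auto simp: tree_vertex_def)
      qed simp
      then show "v \<in> {xs. set xs \<subseteq> {..d} \<and> length xs \<le> n}" using v by simp
    qed
    then have fin: "finite {v. tree_vertex d v \<and> length v < n}"
      by (rule finite_subset) (intro finite_lists_length_le, simp)
    have "\<not> cone_infected d r \<subseteq> {v. tree_vertex d v \<and> length v < n}"
      using inf fin finite_subset by blast
    then obtain v where v: "pinf d 0 [] v r" "\<not> (tree_vertex d v \<and> length v < n)"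
      by (auto simp: cone_infected_eq)
    have "tree_vertex d v" using pinf_tree_vertex[OF v(1)] by simp
    with v have len: "n \<le> length v" by auto
    have "pinf d 0 [] (take n v @ drop n v) r" using v by simp
    then have "pinf d 0 [] (take n v) r" by (simp only: pinf_append)
    then show "reach d n 0 [] r" using len by (auto simp: reach_pinf intro!: exI[of _ "take n v"])
  qed
next
  assume all: "\<forall>n. reach d n 0 [] r"
  show "infinite (cone_infected d r)"
  proof
    assume fin: "finite (cone_infected d r)"
    define n where "n = Suc (Max (length ` cone_infected d r))"
    obtain x where "length x = n" "pinf d 0 [] x r" using all reach_pinf by blast
    then have "x \<in> cone_infected d r" by (simp add: cone_infected_eq)
    then have "length x \<le> Max (length ` cone_infected d r)" using fin by simp
    then show False using \<open>length x = n\<close> n_def by simp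
  qed
qed

lemma reach_Suc_imp: "reach d (Suc n) b w r \<Longrightarrow> reach d n b w r"
proof -
  assume "reach d (Suc n) b w r"
  then obtain x where x: "length x = Suc n" "pinf d b w x r" by (auto simp: reach_pinf)
  then have "pinf d b w (take n x @ drop n x) r" by simp
  then have "pinf d b w (take n x) r" by (simp only: pinf_append)
  then show ?thesis using x(1) by (auto simp: reach_pinf intro!: exI[of _ "take n x"])
qed



definition subT :: "nat \<Rightarrow> nat list \<Rightarrow> nat list set" where
  "subT d u = {v \<in> tree_vertices d. prefix u v}"

lemma reach_measurable:
  assumes "\<And>v. prefix u v \<Longrightarrow> tree_vertex d v \<Longrightarrow> v \<in> K" "tree_vertex d u"
  shows "Measurable.pred (PiM K (\<lambda>_. measure_pmf p)) (\<lambda>r. reach d n b u r)"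
  using assms
proof (induction n arbitrary: b u)
  case 0 then show ?case by simp
next
  case (Suc n)
  have uK: "u \<in> K" using Suc.prems by auto
  have g: "(\<lambda>r. r u) \<in> measurable (PiM K (\<lambda>_. measure_pmf p)) (count_space UNIV)"
    using measurable_component_singleton[OF uK, of "\<lambda>_. measure_pmf p"] by simp
  have f: "Measurable.pred (PiM K (\<lambda>_. measure_pmf p))
      (\<lambda>r. 1 \<le> max b k \<and> (\<exists>c\<in>{..<ch d u}. reach d n (max b k - 1) (u@[c]) r))" for k
  proof (intro pred_intros_conj1' pred_intros_finite(4))
    fix c assume c: "c \<in> {..<ch d u}"
    show "Measurable.pred (PiM K (\<lambda>_. measure_pmf p)) (\<lambda>r. reach d n (max b k - 1) (u @ [c]) r)"
    proof (rule Suc.IH)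
      show "tree_vertex d (u@[c])" using c Suc.prems by (simp add: tree_vertex_snoc)
      fix v assume "prefix (u@[c]) v" "tree_vertex d v"
      then show "v \<in> K" using Suc.prems(1) prefix_order.trans[of u "u@[c]" v] by auto
    qed
  qed simp
  have "Measurable.pred (PiM K (\<lambda>_. measure_pmf p))
      (\<lambda>r. (\<lambda>k r. 1 \<le> max b k \<and> (\<exists>c\<in>{..<ch d u}. reach d n (max b k - 1) (u@[c]) r)) (r u) r)"
    by (rule measurable_compose_countable[OF f g])
  then show ?case by (simp add: Bex_def)
qed

lemma reach_restrict:
  assumes "\<And>v. prefix u v \<Longrightarrow> tree_vertex d v \<Longrightarrow> v \<in> K" "tree_vertex d u"
  shows "reach d n b u (restrict r K) = reach d n b u r"
  using assms
proof (induction n arbitrary: b u)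
  case 0 then show ?case by simp
next
  case (Suc n)
  have uK: "u \<in> K" using Suc.prems by auto
  have IH: "reach d n b' (u@[c]) (restrict r K) = reach d n b' (u@[c]) r" if c: "c < ch d u" for c b'
  proof (rule Suc.IH)
    show "tree_vertex d (u@[c])" using c Suc.prems by (simp add: tree_vertex_snoc)
    fix v assume "prefix (u@[c]) v" "tree_vertex d v"
    then show "v \<in> K" using Suc.prems(1) prefix_order.trans[of u "u@[c]" v] by auto
  qed
  have "(\<exists>c<ch d u. reach d n m (u@[c]) (restrict r K)) = (\<exists>c<ch d u. reach d n m (u@[c]) r)" for m
    using IH by blast
  moreover have ru: "restrict r K u = r u" using uK by simp
  ultimately show ?case by (simp only: reach.simps)
qed

lemma prob_space_cone: "prob_space (cone_measure d p)"
  unfolding cone_measure_def by (rule prob_space_PiM) (simp add: prob_space_measure_pmf)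

lemma space_cone: "space (cone_measure d p) = PiE (tree_vertices d) (\<lambda>_. UNIV)"
  by (simp add: cone_measure_def space_PiM)

lemma indep_coords:
  "prob_space.indep_vars (cone_measure d p) (\<lambda>_. measure_pmf p) (\<lambda>i \<omega>. \<omega> i) (tree_vertices d)"
proof -
  interpret Q: prob_space "cone_measure d p" by (rule prob_space_cone)
  have ne: "tree_vertices d \<noteq> {}" by (auto simp: tree_vertices_def intro!: exI[of _ "[]"])
  show ?thesis
  proof (subst Q.indep_vars_iff_distr_eq_PiM'[OF ne])
    fix i :: "nat list" assume "i \<in> tree_vertices d"
    then show "(\<lambda>\<omega>. \<omega> i) \<in> measurable (cone_measure d p) (measure_pmf p)"
      unfolding cone_measure_def by (rule measurable_component_singleton)
  next
    have "distr (cone_measure d p) (PiM (tree_vertices d) (\<lambda>_. measure_pmf p)) (\<lambda>x. restrict (\<lambda>i. x i) (tree_vertices d))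
        = distr (cone_measure d p) (cone_measure d p) (\<lambda>x. x)"
      unfolding cone_measure_def
    proof (rule distr_cong[OF refl refl])
      fix x assume "x \<in> space (PiM (tree_vertices d) (\<lambda>_. measure_pmf p))"
      then have "x \<in> PiE (tree_vertices d) (\<lambda>_. UNIV)" by (simp add: space_PiM)
      then show "restrict (\<lambda>i. x i) (tree_vertices d) = x" by (simp add: PiE_restrict)
    qed
    also have "\<dots> = cone_measure d p" by (rule distr_id2) auto
    also have "\<dots> = PiM (tree_vertices d) (\<lambda>i. distr (cone_measure d p) (measure_pmf p) (\<lambda>\<omega>. \<omega> i))"
      unfolding cone_measure_def
    proof (rule PiM_cong[OF refl])
      fix x assume "x \<in> tree_vertices d"
      then show "measure_pmf p = distr (PiM (tree_vertices d) (\<lambda>_. measure_pmf p)) (measure_pmf p) (\<lambda>\<omega>. \<omega> x)"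
        by (intro distr_PiM_component[symmetric]) (auto simp: prob_space_measure_pmf)
    qed
    finally show "distr (cone_measure d p) (PiM (tree_vertices d) (\<lambda>_. measure_pmf p)) (\<lambda>x. restrict (\<lambda>i. x i) (tree_vertices d))
        = PiM (tree_vertices d) (\<lambda>i. distr (cone_measure d p) (measure_pmf p) (\<lambda>\<omega>. \<omega> i))" .
  qed
qed



lemma prefix_eq_len: "prefix x v \<Longrightarrow> prefix y v \<Longrightarrow> length x = length y \<Longrightarrow> x = y"
  by (metis prefix_length_prefix prefix_order.antisym order_refl)

lemma measure_coord:
  assumes w: "w \<in> tree_vertices d"
  shows "measure (cone_measure d p) {r\<in>space (cone_measure d p). r w = k} = pmf p k"
proof -
  interpret PP: product_prob_space "\<lambda>_::nat list. measure_pmf p" "tree_vertices d"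
    by (intro product_prob_spaceI prob_space_measure_pmf)
  have "emeasure (cone_measure d p) {r\<in>space (cone_measure d p). r w \<in> {k}} = emeasure (measure_pmf p) {k}"
    unfolding cone_measure_def by (rule PP.emeasure_PiM_Collect_single[OF w]) simp
  then show ?thesis by (simp add: measure_def emeasure_pmf_single)
qed

lemma indep_prod:
  assumes w: "tree_vertex d w"
  shows "measure (cone_measure d p) {r\<in>space (cone_measure d p). r w = k \<and> (\<forall>c<ch d w. \<not> reach d n b' (w@[c]) r)}
       = pmf p k * (\<Prod>c<ch d w. measure (cone_measure d p) {r\<in>space (cone_measure d p). \<not> reach d n b' (w@[c]) r})"
proof -
  interpret Q: prob_space "cone_measure d p" by (rule prob_space_cone)
  define K :: "nat option \<Rightarrow> nat list set" where
    "K j = (case j of None \<Rightarrow> {w} | Some c \<Rightarrow> subT d (w@[c]))" for j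
  define L where "L = insert None (Some ` {..<ch d w})"
  have wV: "w \<in> tree_vertices d" using w by (simp add: tree_vertices_def)
  have KV: "K j \<subseteq> tree_vertices d" if "j \<in> L" for j
    using that wV by (auto simp: K_def L_def subT_def)
  have disj: "disjoint_family_on K L"
  proof (unfold disjoint_family_on_def, intro ballI impI)
    fix i j assume ij: "i \<in> L" "j \<in> L" "i \<noteq> j"
    show "K i \<inter> K j = {}"
    proof (cases i)
      case None
      then obtain c where "j = Some c" using ij by (cases j) auto
      then show ?thesis using None prefix_length_le[of "w@[c]" w]
        by (auto simp: K_def subT_def)
    next
      case (Some c)
      show ?thesis
      proof (cases j)
        case None
        then show ?thesis using Some prefix_length_le[of "w@[c]" w]
          by (auto simp: K_def subT_def)
      next
        case (Some c')
        then have "c \<noteq> c'" using ij \<open>i = Some c\<close> by auto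
        {
          fix v assume "prefix (w@[c]) v" "prefix (w@[c']) v"
          then have "w@[c] = w@[c']" by (rule prefix_eq_len) simp
          then have False using \<open>c \<noteq> c'\<close> by simp
        }
        then show ?thesis using Some \<open>i = Some c\<close> by (auto simp: K_def subT_def)
      qed
    qed
  qed
  have ind: "Q.indep_vars (\<lambda>j. PiM (K j) (\<lambda>_. measure_pmf p)) (\<lambda>j \<omega>. restrict (\<lambda>i. \<omega> i) (K j)) L"
    by (rule Q.indep_vars_restrict[OF indep_coords KV disj])
  define A where
    "A j = (case j of None \<Rightarrow> {x \<in> space (PiM {w} (\<lambda>_. measure_pmf p)). x w = k}
      | Some c \<Rightarrow> {x \<in> space (PiM (subT d (w@[c])) (\<lambda>_. measure_pmf p)). \<not> reach d n b' (w@[c]) x})" for j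
  have Asets: "A j \<in> sets (PiM (K j) (\<lambda>_. measure_pmf p))" if "j \<in> L" for j
  proof (cases j)
    case None
    have "{x \<in> space (PiM {w} (\<lambda>_. measure_pmf p)). x w \<in> {k}} \<in> sets (PiM {w} (\<lambda>_. measure_pmf p))"
      by (rule sets_Collect_single) simp_all
    then show ?thesis using None by (simp add: A_def K_def)
  next
    case (Some c)
    then have c: "c < ch d w" using that by (auto simp: L_def)
    have "Measurable.pred (PiM (subT d (w@[c])) (\<lambda>_. measure_pmf p)) (\<lambda>r. reach d n b' (w@[c]) r)"
      by (rule reach_measurable) (use c w in \<open>auto simp: subT_def tree_vertices_def tree_vertex_snoc\<close>)
    then have "{x \<in> space (PiM (subT d (w@[c])) (\<lambda>_. measure_pmf p)). \<not> reach d n b' (w@[c]) x}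
        \<in> sets (PiM (subT d (w@[c])) (\<lambda>_. measure_pmf p))"
      unfolding pred_def by (rule sets.sets_Collect_neg)
    then show ?thesis using Some by (simp add: A_def K_def)
  qed
  have finL: "finite L" "L \<noteq> {}" by (auto simp: L_def)
  have D: "Q.prob (\<Inter>j\<in>L. (\<lambda>\<omega>. restrict (\<lambda>i. \<omega> i) (K j)) -` A j \<inter> space (cone_measure d p))
      = (\<Prod>j\<in>L. Q.prob ((\<lambda>\<omega>. restrict (\<lambda>i. \<omega> i) (K j)) -` A j \<inter> space (cone_measure d p)))"
    by (rule Q.indep_varsD[OF ind finL(2) finL(1) order_refl Asets])
  have pre_None: "(\<lambda>\<omega>. restrict (\<lambda>i. \<omega> i) (K None)) -` A None \<inter> space (cone_measure d p)
      = {r\<in>space (cone_measure d p). r w = k}"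
    by (auto simp: K_def A_def space_PiM)
  have pre_Some: "(\<lambda>\<omega>. restrict (\<lambda>i. \<omega> i) (K (Some c))) -` A (Some c) \<inter> space (cone_measure d p)
      = {r\<in>space (cone_measure d p). \<not> reach d n b' (w@[c]) r}" if c: "c < ch d w" for c
  proof -
    have "reach d n b' (w@[c]) (restrict r (subT d (w@[c]))) = reach d n b' (w@[c]) r" for r
      by (rule reach_restrict) (use c w in \<open>auto simp: subT_def tree_vertices_def tree_vertex_snoc\<close>)
    then show ?thesis by (auto simp: K_def A_def space_PiM)
  qed
  have "(\<Inter>j\<in>L. (\<lambda>\<omega>. restrict (\<lambda>i. \<omega> i) (K j)) -` A j \<inter> space (cone_measure d p))
      = {r\<in>space (cone_measure d p). r w = k \<and> (\<forall>c<ch d w. \<not> reach d n b' (w@[c]) r)}"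
  proof -
    let ?F = "\<lambda>j. (\<lambda>\<omega>. restrict (\<lambda>i. \<omega> i) (K j)) -` A j \<inter> space (cone_measure d p)"
    have eq1: "(\<Inter>j\<in>L. ?F j) = ?F None \<inter> (\<Inter>c\<in>{..<ch d w}. ?F (Some c))"
      by (simp add: L_def)
    have eq2: "(\<Inter>c\<in>{..<ch d w}. ?F (Some c)) = (\<Inter>c\<in>{..<ch d w}. {r\<in>space (cone_measure d p). \<not> reach d n b' (w@[c]) r})"
      by (rule INF_cong) (simp_all add: pre_Some)
    have eq3: "{r\<in>space (cone_measure d p). r w = k} \<inter> (\<Inter>c\<in>{..<ch d w}. {r\<in>space (cone_measure d p). \<not> reach d n b' (w@[c]) r})
      = {r\<in>space (cone_measure d p). r w = k \<and> (\<forall>c<ch d w. \<not> reach d n b' (w@[c]) r)}"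
      by auto
    show ?thesis by (simp only: eq1 eq2 pre_None eq3)
  qed
  moreover have "(\<Prod>j\<in>L. Q.prob ((\<lambda>\<omega>. restrict (\<lambda>i. \<omega> i) (K j)) -` A j \<inter> space (cone_measure d p)))
      = pmf p k * (\<Prod>c<ch d w. Q.prob {r\<in>space (cone_measure d p). \<not> reach d n b' (w@[c]) r})"
    unfolding L_def using pre_None pre_Some measure_coord[OF wV]
    by (simp add: prod.reindex)
  ultimately show ?thesis using D by simp
qed



lemma pmf_integrable_bounded:
  fixes f :: "nat \<Rightarrow> real"
  assumes "\<And>k. \<bar>f k\<bar> \<le> B"
  shows "integrable (measure_pmf p) f"
  by (rule measure_pmf.integrable_const_bound[where B=B]) (use assms in auto)

lemma exp_lim:
  fixes f :: "nat \<Rightarrow> nat \<Rightarrow> real"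
  assumes b: "\<And>n k. \<bar>f n k\<bar> \<le> B" and l: "\<And>k. (\<lambda>n. f n k) \<longlonglongrightarrow> g k"
  shows "(\<lambda>n. measure_pmf.expectation p (f n)) \<longlonglongrightarrow> measure_pmf.expectation p g"
  by (rule integral_dominated_convergence[where w="\<lambda>_. B"]) (use b l in auto)

lemma pmf_sums:
  fixes g :: "nat \<Rightarrow> real"
  assumes b: "\<And>k. \<bar>g k\<bar> \<le> B"
  shows "(\<lambda>k. pmf p k * g k) sums measure_pmf.expectation p g"
proof -
  have B: "0 \<le> B" using b[of 0] by simp
  have eq: "measure_pmf.expectation p (\<lambda>k. g k * indicator {..<N} k) = (\<Sum>k<N. pmf p k * g k)" for N
    by (subst integral_measure_pmf_real[of "{..<N}"]) (auto simp: indicator_def mult.commute)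
  have "(\<lambda>N. measure_pmf.expectation p (\<lambda>k. g k * indicator {..<N} k)) \<longlonglongrightarrow> measure_pmf.expectation p g"
  proof (rule exp_lim[where B=B])
    fix N k show "\<bar>g k * indicator {..<N} k\<bar> \<le> B" using b[of k] B by (auto simp: indicator_def)
  next
    fix k
    have "\<forall>\<^sub>F N in sequentially. g k * indicator {..<N} k = g k"
      by (rule eventually_sequentiallyI[of "Suc k"]) (auto simp: indicator_def)
    then show "(\<lambda>N. g k * indicator {..<N} k) \<longlonglongrightarrow> g k" by (rule tendsto_eventually)
  qed
  then show ?thesis unfolding sums_def eq .
qed

lemma exp_mono:
  fixes f g :: "nat \<Rightarrow> real"
  assumes "\<And>k. f k \<le> g k" "\<And>k. \<bar>f k\<bar> \<le> B" "\<And>k. \<bar>g k\<bar> \<le> B"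
  shows "measure_pmf.expectation p f \<le> measure_pmf.expectation p g"
  by (rule integral_mono) (use assms in \<open>auto intro: pmf_integrable_bounded[where B=B]\<close>)

lemma exp_01:
  fixes f :: "nat \<Rightarrow> real"
  assumes "\<And>k. 0 \<le> f k" "\<And>k. f k \<le> 1"
  shows "0 \<le> measure_pmf.expectation p f" "measure_pmf.expectation p f \<le> 1"
proof -
  show "0 \<le> measure_pmf.expectation p f" by (rule Bochner_Integration.integral_nonneg) (use assms in auto)
  have "measure_pmf.expectation p f \<le> measure_pmf.expectation p (\<lambda>_. 1)"
    by (rule exp_mono[where B=1]) (use assms in auto)
  then show "measure_pmf.expectation p f \<le> 1" by simp
qed

lemma exp_change0:
  fixes f :: "nat \<Rightarrow> real"
  assumes "\<And>k. \<bar>f k\<bar> \<le> B"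
  shows "measure_pmf.expectation p (\<lambda>k. if k = 0 then a else f k)
       = measure_pmf.expectation p (\<lambda>k. if k = 0 then b else f k) + (a - b) * pmf p 0"
proof -
  have B: "0 \<le> B" using assms[of 0] by simp
  have "(\<lambda>k. if k = 0 then a else f k) = (\<lambda>k. (if k = 0 then b else f k) + (a - b) * indicator {0} k)"
    by (auto simp: indicator_def)
  moreover have "integrable (measure_pmf p) (\<lambda>k. if k = 0 then b else f k)"
    by (rule pmf_integrable_bounded[where B="max B \<bar>b\<bar>"]) (use assms in \<open>auto simp: le_max_iff_disj\<close>)
  moreover have "integrable (measure_pmf p) (\<lambda>k. (a - b) * indicator {0} k)"
    by (rule pmf_integrable_bounded[where B="\<bar>a - b\<bar>"]) (auto simp: indicator_def)
  ultimately show ?thesis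
    by (simp add: measure_pmf_single)
qed



fun Ef :: "nat \<Rightarrow> nat pmf \<Rightarrow> nat \<Rightarrow> nat \<Rightarrow> real" where
  "Ef d p 0 b = 0"
| "Ef d p (Suc n) b = measure_pmf.expectation p (\<lambda>k. if max b k = 0 then 1 else (Ef d p n (max b k - 1))^d)"

lemma Ef_01: "0 \<le> Ef d p n b \<and> Ef d p n b \<le> 1"
proof (induction n arbitrary: b)
  case (Suc n)
  have "0 \<le> (if max b k = 0 then 1 else (Ef d p n (max b k - 1))^d) \<and>
        (if max b k = 0 then 1 else (Ef d p n (max b k - 1))^d) \<le> (1::real)" for k
    using Suc[of "max b k - 1"] by (auto intro: power_le_one)
  then show ?case using exp_01[of "\<lambda>k. if max b k = 0 then 1 else (Ef d p n (max b k - 1))^d" p] by simp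
qed simp

lemma step_measure:
  fixes q :: "nat \<Rightarrow> real"
  assumes w: "tree_vertex d w" and q: "\<And>b. 0 \<le> q b \<and> q b \<le> 1"
    and IH: "\<And>c b'. c < ch d w \<Longrightarrow>
       measure (cone_measure d p) {r\<in>space (cone_measure d p). \<not> reach d n b' (w@[c]) r} = q b'"
  shows "measure (cone_measure d p) {r\<in>space (cone_measure d p). \<not> reach d (Suc n) b w r}
     = measure_pmf.expectation p (\<lambda>k. if max b k = 0 then 1 else q (max b k - 1) ^ ch d w)"
proof -
  let ?M = "cone_measure d p"
  interpret Q: prob_space ?M by (rule prob_space_cone)
  define A where "A k = {r\<in>space ?M. r w = k \<and> (max b k = 0 \<or> (\<forall>c<ch d w. \<not> reach d n (max b k - 1) (w@[c]) r))}" for k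
  have wV: "w \<in> tree_vertices d" using w by (simp add: tree_vertices_def)
  have eq: "{r\<in>space ?M. \<not> reach d (Suc n) b w r} = (\<Union>k. A k)"
    by (auto simp: A_def not_le)
  have Asets: "A k \<in> sets ?M" for k
  proof -
    have P1: "Measurable.pred ?M (\<lambda>r. r w = k)"
      unfolding cone_measure_def using wV by measurable
    have P2: "Measurable.pred ?M (\<lambda>r. \<forall>c\<in>{..<ch d w}. \<not> reach d n (max b k - 1) (w@[c]) r)"
    proof (intro pred_intros_finite(3) pred_intros_logic(2))
      fix c assume "c \<in> {..<ch d w}"
      then show "Measurable.pred ?M (\<lambda>r. reach d n (max b k - 1) (w@[c]) r)"
        unfolding cone_measure_def
        by (intro reach_measurable) (use w in \<open>auto simp: tree_vertices_def tree_vertex_snoc\<close>)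
    qed simp
    have "Measurable.pred ?M (\<lambda>r. r w = k \<and> (max b k = 0 \<or> (\<forall>c\<in>{..<ch d w}. \<not> reach d n (max b k - 1) (w@[c]) r)))"
      using P1 P2 by measurable
    then show ?thesis by (simp only: A_def pred_def lessThan_iff Ball_def)
  qed
  have disj: "disjoint_family A" by (auto simp: disjoint_family_on_def A_def)
  have mA: "measure ?M (A k) = pmf p k * (if max b k = 0 then 1 else q (max b k - 1) ^ ch d w)" for k
  proof (cases "max b k = 0")
    case True
    then have "A k = {r\<in>space ?M. r w = k}" by (auto simp: A_def)
    then show ?thesis using True measure_coord[OF wV] by simp
  next
    case False
    then have "A k = {r\<in>space ?M. r w = k \<and> (\<forall>c<ch d w. \<not> reach d n (max b k - 1) (w@[c]) r)}"
      by (auto simp: A_def)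
    then have "measure ?M (A k) = pmf p k * (\<Prod>c<ch d w. measure ?M {r\<in>space ?M. \<not> reach d n (max b k - 1) (w@[c]) r})"
      using indep_prod[OF w] by simp
    also have "\<dots> = pmf p k * (\<Prod>c<ch d w. q (max b k - 1))"
      using IH by simp
    finally show ?thesis by (simp only: if_not_P[OF False] prod_constant card_lessThan)
  qed
  have s1: "(\<lambda>k. measure ?M (A k)) sums measure ?M (\<Union>k. A k)"
    by (rule Q.finite_measure_UNION) (use Asets disj in auto)
  have s2: "(\<lambda>k. pmf p k * (if max b k = 0 then 1 else q (max b k - 1) ^ ch d w)) sums
      measure_pmf.expectation p (\<lambda>k. if max b k = 0 then 1 else q (max b k - 1) ^ ch d w)"
    by (rule pmf_sums[where B=1]) (use q in \<open>auto intro: power_le_one\<close>)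
  have s1': "(\<lambda>k. pmf p k * (if max b k = 0 then 1 else q (max b k - 1) ^ ch d w)) sums measure ?M (\<Union>k. A k)"
    using s1 by (simp only: mA)
  show ?thesis unfolding eq by (rule sums_unique2[OF s1' s2])
qed

lemma measure_Ef:
  assumes "tree_vertex d w" "w \<noteq> []"
  shows "measure (cone_measure d p) {r\<in>space (cone_measure d p). \<not> reach d n b w r} = Ef d p n b"
  using assms
proof (induction n arbitrary: w b)
  case 0 then show ?case by simp
next
  case (Suc n)
  have "measure (cone_measure d p) {r\<in>space (cone_measure d p). \<not> reach d (Suc n) b w r}
     = measure_pmf.expectation p (\<lambda>k. if max b k = 0 then 1 else Ef d p n (max b k - 1) ^ ch d w)"
  proof (rule step_measure[OF Suc.prems(1)])
    show "0 \<le> Ef d p n b \<and> Ef d p n b \<le> 1" for b by (rule Ef_01)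
    fix c b' assume "c < ch d w"
    then show "measure (cone_measure d p) {r\<in>space (cone_measure d p). \<not> reach d n b' (w@[c]) r} = Ef d p n b'"
      using Suc.prems by (intro Suc.IH) (auto simp: tree_vertex_snoc)
  qed
  moreover have "ch d w = d" using Suc.prems by (simp add: ch_def)
  then have "(\<lambda>k. if max b k = 0 then 1 else Ef d p n (max b k - 1) ^ ch d w)
      = (\<lambda>k. if max b k = 0 then 1 else Ef d p n (max b k - 1) ^ d)" by (intro ext) simp
  ultimately show ?case by (simp only: Ef.simps)
qed

lemma measure_root:
  "measure (cone_measure d p) {r\<in>space (cone_measure d p). \<not> reach d (Suc n) 0 [] r}
     = measure_pmf.expectation p (\<lambda>k. if k = 0 then 1 else Ef d p n (k - 1) ^ Suc d)"
proof -
  have "measure (cone_measure d p) {r\<in>space (cone_measure d p). \<not> reach d (Suc n) 0 [] r}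
     = measure_pmf.expectation p (\<lambda>k. if max 0 k = 0 then 1 else Ef d p n (max 0 k - 1) ^ ch d [])"
  proof (rule step_measure)
    show "0 \<le> Ef d p n b \<and> Ef d p n b \<le> 1" for b by (rule Ef_01)
    fix c b' assume "c < ch d []"
    then show "measure (cone_measure d p) {r\<in>space (cone_measure d p). \<not> reach d n b' ([]@[c]) r} = Ef d p n b'"
      using tree_vertex_snoc[of d "[]" c] by (intro measure_Ef) auto
  qed simp
  moreover have "(\<lambda>k. if max 0 k = 0 then 1 else Ef d p n (max 0 k - 1) ^ ch d [])
      = (\<lambda>k. if k = 0 then 1 else Ef d p n (k - 1) ^ Suc d)" by (rule ext) (simp add: ch_def)
  ultimately show ?thesis by (simp only:)
qed



definition Dn :: "nat \<Rightarrow> nat pmf \<Rightarrow> nat \<Rightarrow> (nat list \<Rightarrow> nat) set" where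
  "Dn d p n = {r\<in>space (cone_measure d p). \<not> reach d n 0 [] r}"

lemma Dn_sets: "Dn d p n \<in> sets (cone_measure d p)"
proof -
  have "Measurable.pred (cone_measure d p) (\<lambda>r. reach d n 0 [] r)"
    unfolding cone_measure_def by (rule reach_measurable) (auto simp: tree_vertices_def)
  then show ?thesis unfolding Dn_def pred_def by (rule sets.sets_Collect_neg)
qed

lemma survival_eq: "survival d p = space (cone_measure d p) - (\<Union>n. Dn d p n)"
  by (auto simp: survival_def Dn_def infinite_iff_reach)

lemma Dn_incseq: "incseq (Dn d p)"
proof (rule incseq_SucI)
  fix n show "Dn d p n \<subseteq> Dn d p (Suc n)"
    unfolding Dn_def using reach_Suc_imp[of d n 0 "[]"] by blast
qed

lemma survival_lim:
  "(\<lambda>n. measure_pmf.expectation p (\<lambda>k. if k = 0 then 1 else Ef d p n (k - 1) ^ Suc d))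
     \<longlonglongrightarrow> 1 - measure (cone_measure d p) (survival d p)"
proof -
  interpret Q: prob_space "cone_measure d p" by (rule prob_space_cone)
  have U: "(\<Union>n. Dn d p n) \<in> sets (cone_measure d p)" using Dn_sets by auto
  have "(\<lambda>n. measure (cone_measure d p) (Dn d p n)) \<longlonglongrightarrow> measure (cone_measure d p) (\<Union>n. Dn d p n)"
    by (rule Q.finite_Lim_measure_incseq) (use Dn_sets Dn_incseq in auto)
  then have "(\<lambda>n. measure (cone_measure d p) (Dn d p (Suc n))) \<longlonglongrightarrow> measure (cone_measure d p) (\<Union>n. Dn d p n)"
    by (rule LIMSEQ_Suc)
  moreover have "measure (cone_measure d p) (Dn d p (Suc n)) =
      measure_pmf.expectation p (\<lambda>k. if k = 0 then 1 else Ef d p n (k - 1) ^ Suc d)" for n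
    unfolding Dn_def by (rule measure_root)
  moreover have "measure (cone_measure d p) (survival d p) = 1 - measure (cone_measure d p) (\<Union>n. Dn d p n)"
    unfolding survival_eq by (rule Q.prob_compl[OF U])
  ultimately show ?thesis by simp
qed



lemma pw_nat: "0 \<le> (x::real) \<Longrightarrow> 0 < n \<Longrightarrow> pw x (real n) = x ^ n"
  by (simp add: pw_def powr_realpow')

lemma Ef_rho:
  assumes d: "1 \<le> d" and r0: "0 \<le> \<rho>" and r1: "\<rho> \<le> 1"
    and req: "measure_pmf.expectation p (\<lambda>k. if k = 0 then 1 else \<rho> ^ (d ^ k)) = \<rho>"
  shows "Ef d p n b \<le> \<rho> ^ (d ^ b)"
proof (induction n arbitrary: b)
  case 0 then show ?case using r0 by simp
next
  case (Suc n)
  have E01: "0 \<le> Ef d p n c" "Ef d p n c \<le> 1" for c using Ef_01 by auto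
  have pw1: "\<And>m. 0 \<le> \<rho> ^ m \<and> \<rho> ^ m \<le> 1" using r0 r1 by (auto intro: power_le_one)
  have key: "Ef d p n (m - 1) ^ d \<le> \<rho> ^ (d ^ m)" if m1: "1 \<le> m" for m
  proof -
    have "Ef d p n (m - 1) ^ d \<le> (\<rho> ^ (d ^ (m - 1))) ^ d"
      by (rule power_mono[OF Suc.IH E01(1)])
    also have "\<dots> = \<rho> ^ (d ^ m)"
    proof -
      obtain j where m: "m = Suc j" using m1 by (cases m) auto
      show ?thesis by (simp only: m diff_Suc_1 power_Suc2 power_mult)
    qed
    finally show ?thesis .
  qed
  show ?case
  proof (cases "b = 0")
    case True
    have "Ef d p (Suc n) b \<le> measure_pmf.expectation p (\<lambda>k. if k = 0 then 1 else \<rho> ^ (d ^ k))"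
      unfolding Ef.simps True
    proof (rule exp_mono[where B=1])
      fix k
      show "(if max 0 k = 0 then 1 else Ef d p n (max 0 k - 1) ^ d) \<le> (if k = 0 then 1 else \<rho> ^ d ^ k)"
        using key[of k] by simp
      show "\<bar>if max 0 k = 0 then 1 else Ef d p n (max 0 k - 1) ^ d\<bar> \<le> 1"
        using E01 by (auto intro: power_le_one)
      show "\<bar>if k = 0 then 1 else \<rho> ^ d ^ k\<bar> \<le> 1" using pw1 by auto
    qed
    then show ?thesis using req True by simp
  next
    case False
    have "Ef d p (Suc n) b \<le> measure_pmf.expectation p (\<lambda>k. \<rho> ^ (d ^ b))"
      unfolding Ef.simps
    proof (rule exp_mono[where B=1])
      fix k
      have "Ef d p n (max b k - 1) ^ d \<le> \<rho> ^ (d ^ max b k)" using False by (intro key) auto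
      also have "\<dots> \<le> \<rho> ^ (d ^ b)"
        by (rule power_decreasing[OF _ r0 r1]) (use d in \<open>auto intro: power_increasing\<close>)
      finally show "(if max b k = 0 then 1 else Ef d p n (max b k - 1) ^ d) \<le> \<rho> ^ d ^ b"
        using False by simp
      show "\<bar>if max b k = 0 then 1 else Ef d p n (max b k - 1) ^ d\<bar> \<le> 1"
        using E01 by (auto intro: power_le_one)
      show "\<bar>\<rho> ^ d ^ b\<bar> \<le> 1" using pw1 by auto
    qed
    then show ?thesis by simp
  qed
qed



lemma Ef_mono: "Ef d p n b \<le> Ef d p (Suc n) b"
proof (induction n arbitrary: b)
  case 0 then show ?case using Ef_01[of d p "Suc 0" b] by simp
next
  case (Suc n)
  have E01: "0 \<le> Ef d p m c" "Ef d p m c \<le> 1" for m c using Ef_01 by auto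
  have "measure_pmf.expectation p (\<lambda>k. if max b k = 0 then 1 else Ef d p n (max b k - 1) ^ d)
     \<le> measure_pmf.expectation p (\<lambda>k. if max b k = 0 then 1 else Ef d p (Suc n) (max b k - 1) ^ d)"
  proof (rule exp_mono[where B=1])
    fix k
    show "(if max b k = 0 then 1 else Ef d p n (max b k - 1) ^ d)
        \<le> (if max b k = 0 then 1 else Ef d p (Suc n) (max b k - 1) ^ d)"
      using power_mono[OF Suc.IH[of "max b k - 1"] E01(1), of d] by (simp del: Ef.simps)
    show "\<bar>if max b k = 0 then 1 else Ef d p n (max b k - 1) ^ d\<bar> \<le> 1"
      using E01 by (auto intro: power_le_one)
    show "\<bar>if max b k = 0 then 1 else Ef d p (Suc n) (max b k - 1) ^ d\<bar> \<le> 1"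
      using E01 by (auto intro: power_le_one simp del: Ef.simps)
  qed
  then show ?case by (simp only: Ef.simps(2)[of d p n] Ef.simps(2)[of d p "Suc n"])
qed

definition elim :: "nat \<Rightarrow> nat pmf \<Rightarrow> nat \<Rightarrow> real" where
  "elim d p b = (SUP n. Ef d p n b)"

lemma elim_lim: "(\<lambda>n. Ef d p n b) \<longlonglongrightarrow> elim d p b"
  unfolding elim_def
proof (rule LIMSEQ_incseq_SUP)
  show "bdd_above (range (\<lambda>n. Ef d p n b))" using Ef_01 by (intro bdd_aboveI[of _ 1]) auto
  show "incseq (\<lambda>n. Ef d p n b)" by (rule incseq_SucI) (rule Ef_mono)
qed

lemma elim_01: "0 \<le> elim d p b" "elim d p b \<le> 1"
proof -
  show "0 \<le> elim d p b" by (rule LIMSEQ_le_const[OF elim_lim]) (use Ef_01 in auto)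
  show "elim d p b \<le> 1" by (rule LIMSEQ_le_const2[OF elim_lim]) (use Ef_01 in auto)
qed

lemma elim_fix: "elim d p b = measure_pmf.expectation p (\<lambda>k. if max b k = 0 then 1 else elim d p (max b k - 1) ^ d)"
proof -
  have "(\<lambda>n. Ef d p (Suc n) b) \<longlonglongrightarrow> elim d p b" by (rule LIMSEQ_Suc[OF elim_lim])
  moreover have "(\<lambda>n. Ef d p (Suc n) b) \<longlonglongrightarrow> measure_pmf.expectation p (\<lambda>k. if max b k = 0 then 1 else elim d p (max b k - 1) ^ d)"
    unfolding Ef.simps
  proof (rule exp_lim[where B=1])
    fix n k
    show "\<bar>if max b k = 0 then 1 else Ef d p n (max b k - 1) ^ d\<bar> \<le> 1"
      using Ef_01[of d p n] by (auto intro: power_le_one)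
    show "(\<lambda>n. if max b k = 0 then 1 else Ef d p n (max b k - 1) ^ d) \<longlonglongrightarrow>
        (if max b k = 0 then 1 else elim d p (max b k - 1) ^ d)"
      by (cases "max b k = 0") (auto intro: tendsto_power[OF elim_lim])
  qed
  ultimately show ?thesis by (rule LIMSEQ_unique)
qed

lemma elim_harris:
  assumes b: "1 \<le> b"
  shows "elim d p 0 * elim d p (b - 1) ^ d \<le> elim d p b"
proof -
  let ?e = "elim d p"
  let ?c = "?e (b - 1) ^ d"
  have c01: "0 \<le> ?c" "?c \<le> 1" using elim_01 by (auto intro: power_le_one)
  have e0: "?e 0 = measure_pmf.expectation p (\<lambda>k. if k = 0 then 1 else ?e (k - 1) ^ d)"
  proof -
    have "(\<lambda>k. if max 0 k = 0 then 1 else ?e (max 0 k - 1) ^ d) = (\<lambda>k. if k = 0 then 1 else ?e (k - 1) ^ d)"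
      by (rule ext) simp
    then show ?thesis using elim_fix[of d p 0] by simp
  qed
  have "?e 0 * ?c = measure_pmf.expectation p (\<lambda>k. (if k = 0 then 1 else ?e (k - 1) ^ d) * ?c)"
    unfolding e0 by simp
  also have "\<dots> \<le> measure_pmf.expectation p (\<lambda>k. if max b k = 0 then 1 else ?e (max b k - 1) ^ d)"
  proof (rule exp_mono[where B=1])
    fix k
    have F01: "0 \<le> (if k = 0 then 1 else ?e (k - 1) ^ d)" "(if k = 0 then 1 else ?e (k - 1) ^ d) \<le> 1"
      using elim_01 by (auto intro: power_le_one)
    show "(if k = 0 then 1 else ?e (k - 1) ^ d) * ?c \<le> (if max b k = 0 then 1 else ?e (max b k - 1) ^ d)"
    proof (cases "k \<le> b")
      case True
      then have "max b k = b" by simp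
      then have eq: "(if max b k = 0 then 1 else ?e (max b k - 1) ^ d) = ?c" using b by simp
      show ?thesis unfolding eq by (rule mult_left_le_one_le) (use F01 c01 in auto)
    next
      case False
      then have "max b k = k" "k \<noteq> 0" by auto
      then have eq: "(if max b k = 0 then 1 else ?e (max b k - 1) ^ d) = (if k = 0 then 1 else ?e (k - 1) ^ d)" by simp
      show ?thesis unfolding eq by (rule mult_right_le_one_le) (use F01 c01 in auto)
    qed
    show "\<bar>(if k = 0 then 1 else ?e (k - 1) ^ d) * ?c\<bar> \<le> 1"
      using F01 c01 by (auto simp: abs_mult intro: mult_le_one)
    show "\<bar>if max b k = 0 then 1 else ?e (max b k - 1) ^ d\<bar> \<le> 1"
      using elim_01 by (auto intro: power_le_one)
  qed
  also have "\<dots> = ?e b" by (rule elim_fix[symmetric])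
  finally show ?thesis .
qed

fun cc :: "nat \<Rightarrow> nat \<Rightarrow> nat" where
  "cc d 0 = 1"
| "cc d (Suc j) = Suc (cc d j * d)"

lemma elim_cc: "elim d p 0 ^ cc d b \<le> elim d p b"
proof (induction b)
  case 0 then show ?case by simp
next
  case (Suc j)
  let ?e = "elim d p"
  have "?e 0 ^ cc d (Suc j) = ?e 0 * (?e 0 ^ cc d j) ^ d" by (simp add: power_mult)
  also have "\<dots> \<le> ?e 0 * ?e j ^ d"
    by (intro mult_left_mono power_mono Suc.IH) (use elim_01 in auto)
  also have "\<dots> \<le> ?e (Suc j)" using elim_harris[of "Suc j" d p] by simp
  finally show ?case .
qed



lemma elim0_eq: "elim d p 0 = measure_pmf.expectation p (\<lambda>k. if k = 0 then 1 else elim d p (k - 1) ^ d)"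
proof -
  have "(\<lambda>k. if max 0 k = 0 then 1 else elim d p (max 0 k - 1) ^ d) = (\<lambda>k. if k = 0 then 1 else elim d p (k - 1) ^ d)"
    by (rule ext) simp
  then show ?thesis using elim_fix[of d p 0] by simp
qed

definition Gf :: "nat \<Rightarrow> nat pmf \<Rightarrow> real \<Rightarrow> real" where
  "Gf d p x = measure_pmf.expectation p (\<lambda>k. if k = 0 then 1 else x ^ (cc d (k - 1) * d))"

lemma Gf_01: "0 \<le> x \<Longrightarrow> x \<le> 1 \<Longrightarrow> 0 \<le> Gf d p x \<and> Gf d p x \<le> 1"
proof -
  assume x: "0 \<le> x" "x \<le> 1"
  have h1: "\<And>k. 0 \<le> (if k = 0 then 1 else x ^ (cc d (k - 1) * d))" using x by auto
  have h2: "\<And>k. (if k = 0 then 1 else x ^ (cc d (k - 1) * d)) \<le> 1" using x by (auto intro: power_le_one)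
  show ?thesis unfolding Gf_def using exp_01[OF h1 h2] by simp
qed

lemma Gf_mono: "0 \<le> x \<Longrightarrow> x \<le> y \<Longrightarrow> y \<le> 1 \<Longrightarrow> Gf d p x \<le> Gf d p y"
  unfolding Gf_def
  by (rule exp_mono[where B=1]) (auto intro: power_le_one power_mono)

lemma Gf_e0: "Gf d p (elim d p 0) \<le> elim d p 0"
proof -
  have "Gf d p (elim d p 0) \<le> measure_pmf.expectation p (\<lambda>k. if k = 0 then 1 else elim d p (k - 1) ^ d)"
    unfolding Gf_def
  proof (rule exp_mono[where B=1])
    fix k
    have "elim d p 0 ^ (cc d (k - 1) * d) = (elim d p 0 ^ cc d (k - 1)) ^ d" by (simp add: power_mult)
    also have "\<dots> \<le> elim d p (k - 1) ^ d"
      by (intro power_mono elim_cc) (use elim_01 in auto)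
    finally show "(if k = 0 then 1 else elim d p 0 ^ (cc d (k - 1) * d)) \<le> (if k = 0 then 1 else elim d p (k - 1) ^ d)"
      by simp
    show "\<bar>if k = 0 then 1 else elim d p 0 ^ (cc d (k - 1) * d)\<bar> \<le> 1"
      using elim_01 by (auto intro: power_le_one)
    show "\<bar>if k = 0 then 1 else elim d p (k - 1) ^ d\<bar> \<le> 1"
      using elim_01 by (auto intro: power_le_one)
  qed
  then show ?thesis using elim0_eq[of d p] by simp
qed

lemma Gf_fix_below:
  "\<exists>L. 0 \<le> L \<and> L \<le> elim d p 0 \<and> Gf d p L = L"
proof -
  define a where "a n = (Gf d p ^^ n) 0" for n
  have a01: "0 \<le> a n \<and> a n \<le> elim d p 0" for n
  proof (induction n)
    case 0 then show ?case using elim_01 by (simp add: a_def)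
  next
    case (Suc n)
    have "a (Suc n) = Gf d p (a n)" by (simp add: a_def)
    moreover have "Gf d p (a n) \<le> Gf d p (elim d p 0)"
      using Suc elim_01 by (intro Gf_mono) auto
    moreover have "0 \<le> Gf d p (a n)" using Suc elim_01[of d p 0] Gf_01[of "a n" d p] by auto
    ultimately show ?case using Gf_e0[of d p] by simp
  qed
  have a1: "a n \<le> 1" for n using a01[of n] elim_01[of d p 0] by simp
  have inc: "a n \<le> a (Suc n)" for n
  proof (induction n)
    case 0 then show ?case using Gf_01[of 0 d p] by (simp add: a_def)
  next
    case (Suc n)
    have "Gf d p (a n) \<le> Gf d p (a (Suc n))" using Suc a01 a1 by (intro Gf_mono) auto
    then show ?case by (simp add: a_def)
  qed
  have lim: "a \<longlonglongrightarrow> (SUP n. a n)"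
  proof (rule LIMSEQ_incseq_SUP)
    show "bdd_above (range a)" using a1 by (intro bdd_aboveI[of _ 1]) auto
    show "incseq a" using inc by (rule incseq_SucI)
  qed
  define L where "L = (SUP n. a n)"
  have L0: "0 \<le> L" by (rule LIMSEQ_le_const[OF lim[folded L_def]]) (use a01 in auto)
  have Le: "L \<le> elim d p 0" by (rule LIMSEQ_le_const2[OF lim[folded L_def]]) (use a01 in auto)
  have "(\<lambda>n. a (Suc n)) \<longlonglongrightarrow> L" using LIMSEQ_Suc[OF lim[folded L_def]] .
  moreover have "(\<lambda>n. a (Suc n)) \<longlonglongrightarrow> Gf d p L"
  proof -
    have "(\<lambda>n. Gf d p (a n)) \<longlonglongrightarrow> Gf d p L"
      unfolding Gf_def
    proof (rule exp_lim[where B=1])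
      fix n k show "\<bar>if k = 0 then 1 else a n ^ (cc d (k - 1) * d)\<bar> \<le> 1"
        using a01[of n] a1[of n] by (auto intro: power_le_one)
      show "(\<lambda>n. if k = 0 then 1 else a n ^ (cc d (k - 1) * d)) \<longlonglongrightarrow> (if k = 0 then 1 else L ^ (cc d (k - 1) * d))"
        by (cases "k = 0") (auto intro: tendsto_power[OF lim[folded L_def]])
    qed
    then show ?thesis by (simp add: a_def)
  qed
  ultimately have "Gf d p L = L" by (rule LIMSEQ_unique[symmetric])
  then show ?thesis using L0 Le by blast
qed

lemma cc_real: "real (cc d j) * (real d - 1) = real d ^ Suc j - 1"
proof (induction j)
  case 0 then show ?case by simp
next
  case (Suc j)
  have "real (cc d (Suc j)) * (real d - 1) = (real d - 1) + real d * (real (cc d j) * (real d - 1))"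
    by (simp add: algebra_simps)
  also have "\<dots> = (real d - 1) + real d * (real d ^ Suc j - 1)" using Suc by simp
  also have "\<dots> = real d ^ Suc (Suc j) - 1" by (simp add: algebra_simps)
  finally show ?case .
qed

lemma pw_cc:
  assumes d: "2 \<le> d" and x: "0 \<le> x" and m: "0 < m"
  shows "pw x (real m / (real d - 1) * (real d ^ k - 1)) = (if k = 0 then 1 else x ^ (cc d (k - 1) * m))"
proof (cases k)
  case 0 then show ?thesis by (simp add: pw_def)
next
  case (Suc j)
  have d1: "real d - 1 \<noteq> 0" using d by simp
  have "real m / (real d - 1) * (real d ^ k - 1) = real m / (real d - 1) * (real (cc d j) * (real d - 1))"
    using cc_real[of d j] Suc by simp
  also have "\<dots> = real (cc d j * m)" using d1 by (simp add: field_simps)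
  finally have e: "real m / (real d - 1) * (real d ^ k - 1) = real (cc d j * m)" .
  have "0 < cc d j" by (cases j) auto
  then have "0 < cc d j * m" using m by simp
  then have "pw x (real (cc d j * m)) = x ^ (cc d j * m)" by (rule pw_nat[OF x])
  then show ?thesis unfolding e using Suc by simp
qed

lemma pw_rho:
  assumes d: "1 \<le> d" and x: "0 \<le> x"
  shows "pw x ((real d + 1) / real d * real d ^ k) = (if k = 0 then pw x ((real d + 1) / real d) else x ^ (d ^ (k - 1) * Suc d))"
proof (cases k)
  case 0 then show ?thesis by simp
next
  case (Suc j)
  have e: "(real d + 1) / real d * real d ^ k = real (d ^ j * Suc d)"
    using d Suc by (simp add: field_simps)
  have "0 < d ^ j * Suc d" using d by simp
  then have "pw x (real (d ^ j * Suc d)) = x ^ (d ^ j * Suc d)" by (rule pw_nat[OF x])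
  then show ?thesis unfolding e using Suc by simp
qed



theorem theorem3:
  fixes d :: nat and p :: "nat pmf" and \<rho> \<psi> :: real
  assumes d: "d \<ge> 2"
    and p0: "0 < pmf p 0" "pmf p 0 < 1"
    and rho_nn: "\<rho> \<ge> 0"
    and rho_root: "measure_pmf.expectation p (\<lambda>k. \<rho> ^ (d ^ k)) + (1 - \<rho>) * pmf p 0 = \<rho>"
    and rho_min: "\<And>x. x \<ge> 0 \<Longrightarrow>
        measure_pmf.expectation p (\<lambda>k. x ^ (d ^ k)) + (1 - x) * pmf p 0 = x \<Longrightarrow> \<rho> \<le> x"
    and psi_nn: "\<psi> \<ge> 0"
    and psi_root: "measure_pmf.expectation p
        (\<lambda>k. pw \<psi> (real d / (real d - 1) * (real d ^ k - 1))) = \<psi>"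
    and psi_min: "\<And>x. x \<ge> 0 \<Longrightarrow>
        measure_pmf.expectation p (\<lambda>k. pw x (real d / (real d - 1) * (real d ^ k - 1))) = x
        \<Longrightarrow> \<psi> \<le> x"
  shows "1 - (1 - pw \<rho> ((real d + 1) / real d)) * pmf p 0
           - measure_pmf.expectation p (\<lambda>k. pw \<rho> ((real d + 1) / real d * real d ^ k))
         \<le> measure (cone_measure d p) (survival d p)
       \<and> measure (cone_measure d p) (survival d p)
         \<le> 1 - measure_pmf.expectation p
                 (\<lambda>k. pw \<psi> ((real d + 1) / (real d - 1) * (real d ^ k - 1)))"
proof -
  let ?S = "measure (cone_measure d p) (survival d p)"
  have d1: "1 \<le> d" using d by simp
  have r1: "\<rho> \<le> 1"
    by (rule rho_min) simp_all
  have rpow: "0 \<le> \<rho> ^ m \<and> \<rho> ^ m \<le> 1" for m using rho_nn r1 by (auto intro: power_le_one)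
  have req: "measure_pmf.expectation p (\<lambda>k. if k = 0 then 1 else \<rho> ^ (d ^ k)) = \<rho>"
  proof -
    have "measure_pmf.expectation p (\<lambda>k. if k = 0 then 1 else \<rho> ^ (d ^ k))
      = measure_pmf.expectation p (\<lambda>k. if k = 0 then \<rho> else \<rho> ^ (d ^ k)) + (1 - \<rho>) * pmf p 0"
      by (rule exp_change0[where B=1]) (use rpow in auto)
    also have "(\<lambda>k. if k = 0 then \<rho> else \<rho> ^ (d ^ k)) = (\<lambda>k. \<rho> ^ (d ^ k))" by (rule ext) simp
    finally show ?thesis using rho_root by simp
  qed
  define B\<rho> where "B\<rho> = measure_pmf.expectation p (\<lambda>k. if k = 0 then 1 else \<rho> ^ (d ^ (k - 1) * Suc d))"
  have stepB: "measure_pmf.expectation p (\<lambda>k. if k = 0 then 1 else Ef d p n (k - 1) ^ Suc d) \<le> B\<rho>" for n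
    unfolding B\<rho>_def
  proof (rule exp_mono[where B=1])
    fix k
    have "Ef d p n (k - 1) ^ Suc d \<le> (\<rho> ^ (d ^ (k - 1))) ^ Suc d"
      by (intro power_mono Ef_rho[OF d1 rho_nn r1 req]) (use Ef_01 in auto)
    then have "Ef d p n (k - 1) ^ Suc d \<le> \<rho> ^ (d ^ (k - 1) * Suc d)" by (simp only: power_mult)
    then show "(if k = 0 then 1 else Ef d p n (k - 1) ^ Suc d) \<le> (if k = 0 then 1 else \<rho> ^ (d ^ (k - 1) * Suc d))"
      by simp
    show "\<bar>if k = 0 then 1 else Ef d p n (k - 1) ^ Suc d\<bar> \<le> 1"
      using Ef_01[of d p n "k - 1"] by (auto intro: power_le_one simp del: power_Suc)
    show "\<bar>if k = 0 then 1 else \<rho> ^ (d ^ (k - 1) * Suc d)\<bar> \<le> 1" using rpow by auto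
  qed
  have low: "1 - ?S \<le> B\<rho>"
    by (rule LIMSEQ_le_const2[OF survival_lim]) (use stepB in auto)
  have lhs: "1 - (1 - pw \<rho> ((real d + 1) / real d)) * pmf p 0
           - measure_pmf.expectation p (\<lambda>k. pw \<rho> ((real d + 1) / real d * real d ^ k)) = 1 - B\<rho>"
  proof -
    have e1: "(\<lambda>k. pw \<rho> ((real d + 1) / real d * real d ^ k))
        = (\<lambda>k. if k = 0 then pw \<rho> ((real d + 1) / real d) else \<rho> ^ (d ^ (k - 1) * Suc d))"
      by (rule ext) (rule pw_rho[OF d1 rho_nn])
    have "B\<rho> = measure_pmf.expectation p (\<lambda>k. if k = 0 then pw \<rho> ((real d + 1) / real d) else \<rho> ^ (d ^ (k - 1) * Suc d))
        + (1 - pw \<rho> ((real d + 1) / real d)) * pmf p 0"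
      unfolding B\<rho>_def by (rule exp_change0[where B=1]) (use rpow in auto)
    then show ?thesis unfolding e1 by simp
  qed
  obtain L where L: "0 \<le> L" "L \<le> elim d p 0" "Gf d p L = L" using Gf_fix_below by blast
  have psiL: "\<psi> \<le> L"
  proof (rule psi_min[OF L(1)])
    have "(\<lambda>k. pw L (real d / (real d - 1) * (real d ^ k - 1))) = (\<lambda>k. if k = 0 then 1 else L ^ (cc d (k - 1) * d))"
      by (rule ext) (rule pw_cc[OF d L(1)], use d in simp)
    then show "measure_pmf.expectation p (\<lambda>k. pw L (real d / (real d - 1) * (real d ^ k - 1))) = L"
      using L(3) by (simp add: Gf_def)
  qed
  have lim2: "(\<lambda>n. measure_pmf.expectation p (\<lambda>k. if k = 0 then 1 else Ef d p n (k - 1) ^ Suc d))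
      \<longlonglongrightarrow> measure_pmf.expectation p (\<lambda>k. if k = 0 then 1 else elim d p (k - 1) ^ Suc d)"
  proof (rule exp_lim[where B=1])
    fix n k show "\<bar>if k = 0 then 1 else Ef d p n (k - 1) ^ Suc d\<bar> \<le> 1"
      using Ef_01[of d p n "k - 1"] by (auto intro: power_le_one simp del: power_Suc)
    show "(\<lambda>n. if k = 0 then 1 else Ef d p n (k - 1) ^ Suc d) \<longlonglongrightarrow> (if k = 0 then 1 else elim d p (k - 1) ^ Suc d)"
      by (cases "k = 0") (auto intro: tendsto_power[OF elim_lim] simp del: power_Suc)
  qed
  have eqS: "1 - ?S = measure_pmf.expectation p (\<lambda>k. if k = 0 then 1 else elim d p (k - 1) ^ Suc d)"
    by (rule LIMSEQ_unique[OF survival_lim lim2])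
  have psi1: "\<psi> \<le> 1" using psiL L(2) elim_01[of d p 0] by simp
  have up: "measure_pmf.expectation p (\<lambda>k. if k = 0 then 1 else \<psi> ^ (cc d (k - 1) * Suc d))
      \<le> measure_pmf.expectation p (\<lambda>k. if k = 0 then 1 else elim d p (k - 1) ^ Suc d)"
  proof (rule exp_mono[where B=1])
    fix k
    have "\<psi> ^ (cc d (k - 1) * Suc d) = (\<psi> ^ cc d (k - 1)) ^ Suc d" by (rule power_mult)
    also have "\<dots> \<le> (elim d p 0 ^ cc d (k - 1)) ^ Suc d"
      by (intro power_mono) (use psi_nn psiL L(2) in auto)
    also have "\<dots> \<le> elim d p (k - 1) ^ Suc d"
      by (intro power_mono elim_cc) (use elim_01 in auto)
    finally show "(if k = 0 then 1 else \<psi> ^ (cc d (k - 1) * Suc d)) \<le> (if k = 0 then 1 else elim d p (k - 1) ^ Suc d)"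
      by simp
    show "\<bar>if k = 0 then 1 else \<psi> ^ (cc d (k - 1) * Suc d)\<bar> \<le> 1"
      using psi_nn psi1 by (auto intro: power_le_one simp del: power_Suc)
    show "\<bar>if k = 0 then 1 else elim d p (k - 1) ^ Suc d\<bar> \<le> 1"
      using elim_01 by (auto intro: power_le_one simp del: power_Suc)
  qed
  have rhs: "(\<lambda>k. pw \<psi> ((real d + 1) / (real d - 1) * (real d ^ k - 1)))
      = (\<lambda>k. if k = 0 then 1 else \<psi> ^ (cc d (k - 1) * Suc d))"
  proof (rule ext)
    fix k
    have "pw \<psi> (real (Suc d) / (real d - 1) * (real d ^ k - 1)) = (if k = 0 then 1 else \<psi> ^ (cc d (k - 1) * Suc d))"
      by (rule pw_cc[OF d psi_nn]) simp
    then show "pw \<psi> ((real d + 1) / (real d - 1) * (real d ^ k - 1)) = (if k = 0 then 1 else \<psi> ^ (cc d (k - 1) * Suc d))"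
      by (simp add: add.commute)
  qed
  show ?thesis
  proof
    show "1 - (1 - pw \<rho> ((real d + 1) / real d)) * pmf p 0
           - measure_pmf.expectation p (\<lambda>k. pw \<rho> ((real d + 1) / real d * real d ^ k)) \<le> ?S"
      unfolding lhs using low by simp
    show "?S \<le> 1 - measure_pmf.expectation p (\<lambda>k. pw \<psi> ((real d + 1) / (real d - 1) * (real d ^ k - 1)))"
      unfolding rhs using up eqS by simp
  qed
qed


end
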